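(* Let $W\in\mathbb{D}_n$ satisfy the Ground Assumption, and let $\sigma\subset\mathcal{E}$, $\tau\subset\mathcal{I}$. If $\sigma\sqcup\tau\in FP(W)$, then $\sigma\sqcup\tau'\in FP(W)$ for every $\tau'$ with $\tau\subset\tau'\subset\mathcal{I}$.
   Context: Threshold-linear network: $\dot x_i=-x_i+[\sum_j W_{ij}x_j+b_i]_+$ with $[y]_+=\max(0,y)$; a fixed point is $x^*$ with $x^*=[Wx^*+b]_+$. A Dale matrix $W\in\mathbb{D}_n$ is an $n\times n$ real matrix with a partition $[n]=\mathcal{E}\sqcup\mathcal{I}$ such that $W_{ii}=0$, $W_{ji}\ge0$ for all $j$ if $i\in\mathcal{E}$, $W_{ji}\le0$ for all $j$ if $i\in\mathcal{I}$. Ground Assumption: $(I-W)_\sigma$ nonsingular for every nonempty $\sigma\subset[n]$. $FP(W,b)$ is the set of supports $\{i\in[n]:x^*_i>0\}$ of all fixed points $x^*$ of the network $(W,b)$, and $FP(W)=\bigcup_{b\in\mathbb{R}^n_{\ge0}}FP(W,b)$. *)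

theory Defs
  imports "HOL-Analysis.Analysis"
begin

text \<open>Neurons are indexed by a finite type 'n (so n = CARD('n)); W is an n x n real matrix.\<close>

definition relu :: "real \<Rightarrow> real" where
  "relu y = max 0 y"

definition dale_matrix :: "real^'n^'n \<Rightarrow> 'n set \<Rightarrow> 'n set \<Rightarrow> bool" where
  "dale_matrix W E I \<longleftrightarrow>
     E \<inter> I = {} \<and> E \<union> I = UNIV \<and>
     (\<forall>i. W $ i $ i = 0) \<and>
     (\<forall>i\<in>E. \<forall>j. W $ j $ i \<ge> 0) \<and>
     (\<forall>i\<in>I. \<forall>j. W $ j $ i \<le> 0)"

text \<open>The principal submatrix (I - W)_\<sigma> (rows and columns in \<sigma>) is nonsingular:
  its kernel is trivial, i.e. the only vector supported on \<sigma> whose image under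
  I - W vanishes on \<sigma> is zero.\<close>
definition principal_nonsingular :: "real^'n^'n \<Rightarrow> 'n set \<Rightarrow> bool" where
  "principal_nonsingular A \<sigma> \<longleftrightarrow>
     (\<forall>x::real^'n. (\<forall>i. i \<notin> \<sigma> \<longrightarrow> x $ i = 0) \<and> (\<forall>i\<in>\<sigma>. (A *v x) $ i = 0) \<longrightarrow> x = 0)"

definition ground_assumption :: "real^'n^'n \<Rightarrow> bool" where
  "ground_assumption W \<longleftrightarrow>
     (\<forall>\<sigma>. \<sigma> \<noteq> {} \<longrightarrow> principal_nonsingular (mat 1 - W) \<sigma>)"

definition is_fixed_point :: "real^'n^'n \<Rightarrow> real^'n \<Rightarrow> real^'n \<Rightarrow> bool" where
  "is_fixed_point W b x \<longleftrightarrow> (\<forall>i. x $ i = relu ((W *v x) $ i + b $ i))"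

definition supp :: "real^'n \<Rightarrow> 'n set" where
  "supp x = {i. x $ i > 0}"

definition FPb :: "real^'n^'n \<Rightarrow> real^'n \<Rightarrow> 'n set set" where
  "FPb W b = {supp x | x. is_fixed_point W b x}"

definition FP :: "real^'n^'n \<Rightarrow> 'n set set" where
  "FP W = (\<Union>b\<in>{b::real^'n. \<forall>i. b $ i \<ge> 0}. FPb W b)"

end

theory Submission
  imports Defs
begin

theorem mainTheorem12:
  fixes W :: "real^'n^'n" and E I \<sigma> \<tau> \<tau>' :: "'n set"
  assumes "dale_matrix W E I"
    and "ground_assumption W"
    and "\<sigma> \<subseteq> E" and "\<tau> \<subseteq> I"
    and "\<sigma> \<union> \<tau> \<in> FP W"
    and "\<tau> \<subseteq> \<tau>'" and "\<tau>' \<subseteq> I"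
  shows "\<sigma> \<union> \<tau>' \<in> FP W"
proof -
  have dale: "E \<inter> I = {}" "\<And>i j. i \<in> I \<Longrightarrow> W $ j $ i \<le> 0"
    using assms(1) unfolding dale_matrix_def by auto
  obtain b x where b: "\<forall>i. b $ i \<ge> 0" and fp: "is_fixed_point W b x"
    and sx: "supp x = \<sigma> \<union> \<tau>"
    using assms(5) unfolding FP_def FPb_def by blast
  have xfp: "\<And>i. x $ i = relu ((W *v x) $ i + b $ i)" using fp unfolding is_fixed_point_def by blast
  have xnn: "\<And>i. x $ i \<ge> 0" using xfp unfolding relu_def by (metis max.cobounded1)
  define D where "D = \<tau>' - \<tau>"
  have Dx: "\<And>j. j \<in> D \<Longrightarrow> x $ j = 0"
  proof -
    fix j assume "j \<in> D"
    then have "j \<notin> supp x" using sx dale(1) assms(3,7) unfolding D_def by auto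
    then show "x $ j = 0" using xnn[of j] unfolding supp_def by auto
  qed
  define y :: "real^'n" where "y = (\<chi> j. if j \<in> D then 1 + \<bar>(W *v x) $ j\<bar> else x $ j)"
  have mono: "(W *v y) $ i \<le> (W *v x) $ i" for i
  proof -
    have "(W *v y) $ i = (\<Sum>j\<in>UNIV. W $ i $ j * y $ j)" by (simp add: matrix_vector_mult_def)
    also have "\<dots> \<le> (\<Sum>j\<in>UNIV. W $ i $ j * x $ j)"
    proof (rule sum_mono)
      fix j :: 'n
      show "W $ i $ j * y $ j \<le> W $ i $ j * x $ j"
      proof (cases "j \<in> D")
        case True
        then have "j \<in> I" using assms(7) unfolding D_def by auto
        then have "W $ i $ j \<le> 0" using dale(2) by blast
        moreover have "y $ j \<ge> x $ j" using True Dx[OF True] unfolding y_def by simp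
        ultimately show ?thesis by (simp add: mult_left_mono_neg)
      next
        case False then show ?thesis unfolding y_def by simp
      qed
    qed
    also have "\<dots> = (W *v x) $ i" by (simp add: matrix_vector_mult_def)
    finally show ?thesis .
  qed
  have sy: "supp y = \<sigma> \<union> \<tau>'"
  proof -
    have "y $ j > 0 \<longleftrightarrow> j \<in> D \<or> x $ j > 0" for j
      unfolding y_def by (auto simp: Dx)
    then show ?thesis using sx assms(6) unfolding supp_def D_def by auto
  qed
  define b' :: "real^'n" where "b' = (\<chi> i. if y $ i > 0 then y $ i - (W *v y) $ i else 0)"
  have b'nn: "\<forall>i. b' $ i \<ge> 0"
  proof
    fix i
    show "b' $ i \<ge> 0"
    proof (cases "y $ i > 0")
      case True
      show ?thesis
      proof (cases "i \<in> D")
        case True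
        then have "y $ i = 1 + \<bar>(W *v x) $ i\<bar>" unfolding y_def by simp
        then show ?thesis using mono[of i] \<open>y $ i > 0\<close> unfolding b'_def by simp
      next
        case False
        then have yx: "y $ i = x $ i" unfolding y_def by simp
        then have "x $ i > 0" using True by simp
        then have "x $ i = (W *v x) $ i + b $ i" using xfp[of i] unfolding relu_def by (auto simp: max_def split: if_splits)
        then show ?thesis using mono[of i] b True yx unfolding b'_def by (smt (verit) vec_lambda_beta)
      qed
    next
      case False then show ?thesis unfolding b'_def by simp
    qed
  qed
  have "is_fixed_point W b' y"
    unfolding is_fixed_point_def
  proof
    fix i
    show "y $ i = relu ((W *v y) $ i + b' $ i)"
    proof (cases "y $ i > 0")
      case True then show ?thesis unfolding b'_def relu_def by simp
    next
      case False
      then have "i \<notin> D" unfolding y_def by auto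
      then have yx: "y $ i = x $ i" unfolding y_def by simp
      then have x0: "x $ i = 0" using False xnn[of i] by simp
      then have "(W *v x) $ i + b $ i \<le> 0" using xfp[of i] unfolding relu_def by (auto simp: max_def split: if_splits)
      then have "(W *v y) $ i \<le> 0" using mono[of i] b by (smt (verit))
      then show ?thesis using False yx x0 unfolding b'_def relu_def by simp
    qed
  qed
  then show ?thesis using sy b'nn unfolding FP_def FPb_def by blast
qed

end
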